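(* Let $k\ge1$ be an integer. The expected number of fixed points of the permutation obtained by performing a $k$-riffle shuffle on $n$ cards followed by reversing the order of the cards is \[ 1-\frac{1}{k}+\frac{1}{k^2}-\cdots+\frac{(-1)^{n-1}}{k^{n-1}}.\]
   Context: A $k$-riffle shuffle on $n$ cards: cut the deck into $k$ consecutive piles of sizes $j_1,\dots,j_k$ with probability $\binom{n}{j_1,\dots,j_k}/k^n$, then drop cards one at a time, each time from a pile chosen with probability proportional to its current size. Reversing the order of the cards replaces the resulting permutation $w$ by $w\circ w_0$, $w_0(i)=n+1-i$. *)

theory Defs
  imports "HOL-Probability.Probability"
begin

definition cut_pmf :: "nat \<Rightarrow> nat \<Rightarrow> nat list pmf" where
  "cut_pmf k n = embed_pmf (\<lambda>js.
     if length js = k \<and> sum_list js = n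
     then fact n / (\<Prod>j\<leftarrow>js. fact j) / real k ^ n else 0)"

fun cut_deck :: "nat list \<Rightarrow> 'a list \<Rightarrow> 'a list list" where
  "cut_deck [] xs = []"
| "cut_deck (j # js) xs = take j xs # cut_deck js (drop j xs)"

text \<open>Dropping m cards one at a time: a pile is chosen with probability
  proportional to its current size (choose a uniformly random card position
  among all remaining cards and use its pile); the next card of that pile is
  dropped as the next card of the resulting deck.\<close>
primrec drop_cards :: "nat \<Rightarrow> 'a list list \<Rightarrow> 'a list pmf" where
  "drop_cards 0 ps = return_pmf []"
| "drop_cards (Suc m) ps =
     bind_pmf (pmf_of_set {(i, j). i < length ps \<and> j < length (ps ! i)})
       (\<lambda>(i, j). map_pmf (\<lambda>r. hd (ps ! i) # r)
                         (drop_cards m (ps[i := tl (ps ! i)])))"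

text \<open>The k-riffle shuffle of the deck [1,...,n]; result is the new deck,
  listed from top to bottom.\<close>
definition riffle_pmf :: "nat \<Rightarrow> nat \<Rightarrow> nat list pmf" where
  "riffle_pmf k n = bind_pmf (cut_pmf k n)
     (\<lambda>js. drop_cards n (cut_deck js [1..<n+1]))"

definition perm_of_deck :: "nat list \<Rightarrow> nat \<Rightarrow> nat" where
  "perm_of_deck d i = d ! (i - 1)"

definition w0 :: "nat \<Rightarrow> nat \<Rightarrow> nat" where
  "w0 n i = n + 1 - i"

definition num_fixed_points :: "nat \<Rightarrow> (nat \<Rightarrow> nat) \<Rightarrow> nat" where
  "num_fixed_points n w = card {i \<in> {1..n}. w i = i}"

end

theory Submission
  imports Defs
begin

definition cc :: "nat list \<Rightarrow> nat \<Rightarrow> nat \<Rightarrow> nat" where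
  "cc M v t = length (filter (\<lambda>x. x < v) M) + count_list (take t M) v"

lemma step_mono:
  assumes "\<And>t. t < m \<Longrightarrow> f (Suc t) = f t + 1 + (if b t then 1 else 0)"
  shows "t \<le> m \<Longrightarrow> f 0 + t \<le> (f t::nat)"
  using assms by (induction t) fastforce+

lemma key_count:
  fixes f :: "nat \<Rightarrow> nat"
  assumes "\<And>t. t < m \<Longrightarrow> f (Suc t) = f t + 1 + (if b t then 1 else 0)"
    and "f 0 \<le> T" and "T \<le> f m"
  shows "(\<Sum>t\<le>m. if f t = T then 1 else 0) + (\<Sum>t<m. if b t \<and> f t + 1 = T then 1 else 0) = (1::nat)"
  using assms
proof (induction m arbitrary: f b)
  case 0
  then show ?case by simp
next
  case (Suc m)
  have mono: "\<And>t. t \<le> Suc m \<Longrightarrow> f 0 + t \<le> f t"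
    using step_mono[of "Suc m" f b] Suc.prems(1) by blast
  show ?case
  proof (cases "f 0 = T")
    case True
    have z1: "(\<Sum>t\<le>m. if f (Suc t) = T then 1 else 0) = (0::nat)"
    proof (intro sum.neutral ballI)
      fix t assume "t \<in> {..m}"
      then have "f 0 + Suc t \<le> f (Suc t)" using mono[of "Suc t"] by simp
      then show "(if f (Suc t) = T then 1 else 0) = (0::nat)" using True by simp
    qed
    have z2: "(\<Sum>t<m. if b (Suc t) \<and> f (Suc t) + 1 = T then 1 else 0) = (0::nat)"
    proof (intro sum.neutral ballI)
      fix t assume "t \<in> {..<m}"
      then have "f 0 + Suc t \<le> f (Suc t)" using mono[of "Suc t"] by simp
      then show "(if b (Suc t) \<and> f (Suc t) + 1 = T then 1 else 0) = (0::nat)" using True by simp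
    qed
    show ?thesis unfolding sum.atMost_Suc_shift sum.lessThan_Suc_shift using True z1 z2 by simp
  next
    case False
    show ?thesis
    proof (cases "f 1 \<le> T")
      case True
      have "(\<Sum>t\<le>m. if (f \<circ> Suc) t = T then 1 else 0) + (\<Sum>t<m. if (b \<circ> Suc) t \<and> (f \<circ> Suc) t + 1 = T then 1 else 0) = (1::nat)"
        by (rule Suc.IH) (use Suc.prems True in auto)
      moreover have "\<not> (b 0 \<and> f 0 + 1 = T)" using Suc.prems(1)[of 0] True by auto
      ultimately show ?thesis unfolding sum.atMost_Suc_shift sum.lessThan_Suc_shift using False by simp
    next
      case False2: False
      have b0: "b 0 \<and> f 0 + 1 = T" using Suc.prems(1)[of 0] Suc.prems(2) False False2 by (auto split: if_splits)
      have mono1: "\<And>t. t \<le> m \<Longrightarrow> f 1 \<le> f (Suc t)"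
      proof -
        fix t assume "t \<le> m" thus "f 1 \<le> f (Suc t)"
          by (induction t) (use Suc.prems(1) in fastforce)+
      qed
      have z1: "(\<Sum>t\<le>m. if f (Suc t) = T then 1 else 0) = (0::nat)"
      proof (intro sum.neutral ballI)
        fix t assume "t \<in> {..m}"
        then have "f 1 \<le> f (Suc t)" using mono1 by simp
        then show "(if f (Suc t) = T then 1 else 0) = (0::nat)" using False2 by simp
      qed
      have z2: "(\<Sum>t<m. if b (Suc t) \<and> f (Suc t) + 1 = T then 1 else 0) = (0::nat)"
      proof (intro sum.neutral ballI)
        fix t assume "t \<in> {..<m}"
        then have "f 1 \<le> f (Suc t)" using mono1 by simp
        then show "(if b (Suc t) \<and> f (Suc t) + 1 = T then 1 else 0) = (0::nat)" using False2 by simp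
      qed
      show ?thesis unfolding sum.atMost_Suc_shift sum.lessThan_Suc_shift using False b0 z1 z2 by simp
    qed
  qed
qed

lemma cc_Suc: "t < length M \<Longrightarrow> cc M v (Suc t) = cc M v t + (if M!t = v then 1 else 0)"
  by (simp add: cc_def take_Suc_conv_app_nth)

lemma cc_ins: "t \<le> length M \<Longrightarrow> cc (take t M @ v # drop t M) v t = cc M v t"
proof -
  assume t: "t \<le> length M"
  have "length (filter (\<lambda>x. x < v) (take t M @ v # drop t M)) = length (filter (\<lambda>x. x < v) M)"
    by (metis (no_types, lifting) append_take_drop_id filter.simps(2) filter_append less_irrefl)
  moreover have "take t (take t M @ v # drop t M) = take t M" using t by simp
  ultimately show ?thesis by (simp add: cc_def)
qed

lemma per_Mv:
  assumes "length M = m"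
  shows "(\<Sum>t\<le>m. if cc M v t + t = m then 1 else 0) + (\<Sum>t<m. if M!t = v \<and> cc M v t + t + 1 = m then 1 else 0) = (1::nat)"
proof -
  have "(\<Sum>t\<le>m. if (\<lambda>t. cc M v t + t) t = m then 1 else 0) + (\<Sum>t<m. if (\<lambda>t. M!t = v) t \<and> (\<lambda>t. cc M v t + t) t + 1 = m then 1 else 0) = (1::nat)"
  proof (rule key_count)
    fix t assume "t < m" thus "cc M v (Suc t) + Suc t = cc M v t + t + 1 + (if M ! t = v then 1 else 0)"
      using cc_Suc[of t M v] assms by simp
  next
    show "cc M v 0 + 0 \<le> m" using assms length_filter_le[of "\<lambda>x. x < v" M] by (simp add: cc_def)
  next
    show "m \<le> cc M v m + m" by simp
  qed
  thus ?thesis by simp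
qed

definition AA :: "nat \<Rightarrow> nat \<Rightarrow> nat list set" where
  "AA k n = {L. set L \<subseteq> {..<k} \<and> length L = n}"

definition NN :: "nat \<Rightarrow> nat \<Rightarrow> nat" where
  "NN k n = (\<Sum>L\<in>AA k n. \<Sum>t<n. if cc L (L!t) t + t + 1 = n then 1 else 0)"

lemma finite_AA: "finite (AA k n)"
  unfolding AA_def by (rule finite_lists_length_eq) simp

lemma card_AA: "card (AA k n) = k ^ n"
  unfolding AA_def using card_lists_length_eq[of "{..<k}" n] by simp

lemma ins_j: "length L = Suc m \<Longrightarrow> t \<le> m \<Longrightarrow>
  take t (take t L @ drop (Suc t) L) @ L!t # drop t (take t L @ drop (Suc t) L) = L"
  by (simp add: min_def id_take_nth_drop[symmetric])

lemma reindex_ins: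
  fixes g :: "nat list \<Rightarrow> nat"
  assumes "t \<le> m"
  shows "(\<Sum>L\<in>AA k (Suc m). g L) = (\<Sum>p\<in>AA k m \<times> {..<k}. g (take t (fst p) @ snd p # drop t (fst p)))"
proof (rule sum.reindex_bij_witness[where i = "\<lambda>p. take t (fst p) @ snd p # drop t (fst p)"
      and j = "\<lambda>L. (take t L @ drop (Suc t) L, L!t)"])
  fix L assume L: "L \<in> AA k (Suc m)"
  then have len: "length L = Suc m" and s: "set L \<subseteq> {..<k}" by (auto simp: AA_def)
  show "take t (fst (take t L @ drop (Suc t) L, L ! t)) @ snd (take t L @ drop (Suc t) L, L ! t) # drop t (fst (take t L @ drop (Suc t) L, L ! t)) = L"
    using len assms by (simp add: min_def id_take_nth_drop[symmetric])
  have "set (take t L @ drop (Suc t) L) \<subseteq> set L"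
    by (auto dest: in_set_takeD in_set_dropD)
  moreover have "L ! t < k"
  proof -
    have "L ! t \<in> set L" using len assms by simp
    thus ?thesis using s by auto
  qed
  ultimately show "(take t L @ drop (Suc t) L, L ! t) \<in> AA k m \<times> {..<k}"
    using s len assms by (auto simp: AA_def min_def)
next
  fix p assume p: "p \<in> AA k m \<times> {..<k}"
  obtain M v where pe: "p = (M, v)" by (cases p)
  with p have len: "length M = m" and s: "set M \<subseteq> {..<k}" and v: "v < k" by (auto simp: AA_def)
  show "(take t (take t (fst p) @ snd p # drop t (fst p)) @ drop (Suc t) (take t (fst p) @ snd p # drop t (fst p)),
        (take t (fst p) @ snd p # drop t (fst p)) ! t) = p"
    using pe len assms by (simp add: min_def nth_append)
  have "set (take t M) \<subseteq> {..<k}" "set (drop t M) \<subseteq> {..<k}"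
    using s by (meson order_trans set_take_subset set_drop_subset)+
  then show "take t (fst p) @ snd p # drop t (fst p) \<in> AA k (Suc m)"
    using pe len assms v by (auto simp: AA_def)
next
  fix L assume "L \<in> AA k (Suc m)"
  then show "g (take t (fst (take t L @ drop (Suc t) L, L ! t)) @ snd (take t L @ drop (Suc t) L, L ! t) # drop t (fst (take t L @ drop (Suc t) L, L ! t))) = g L"
    using ins_j[of L m t] assms by (simp add: AA_def)
qed

lemma sum_prod_pair: "(\<Sum>x\<in>A. \<Sum>y\<in>B. h (x,y)) = (\<Sum>p\<in>A\<times>B. h p)"
  by (subst sum.cartesian_product) (simp add: case_prod_beta')

lemma NN_rec: "NN k (Suc m) + NN k m = k ^ Suc m"
proof -
  let ?P = "AA k m \<times> {..<k}"
  let ?ins = "\<lambda>t p. take t (fst p) @ snd p # drop t (fst p)"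
  have "NN k (Suc m) = (\<Sum>t<Suc m. \<Sum>L\<in>AA k (Suc m). if cc L (L!t) t + t + 1 = Suc m then 1 else 0)"
    unfolding NN_def by (rule sum.swap)
  also have "\<dots> = (\<Sum>t<Suc m. \<Sum>p\<in>?P. if cc (fst p) (snd p) t + t = m then 1 else 0)"
  proof (rule sum.cong[OF refl])
    fix t assume "t \<in> {..<Suc m}"
    then have t: "t \<le> m" by simp
    have "(\<Sum>L\<in>AA k (Suc m). if cc L (L!t) t + t + 1 = Suc m then 1 else 0)
       = (\<Sum>p\<in>?P. if cc (?ins t p) (?ins t p ! t) t + t + 1 = Suc m then 1 else (0::nat))"
      by (rule reindex_ins[OF t])
    also have "\<dots> = (\<Sum>p\<in>?P. if cc (fst p) (snd p) t + t = m then 1 else 0)"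
    proof (rule sum.cong[OF refl])
      fix p assume "p \<in> ?P"
      then have len: "length (fst p) = m" by (auto simp: AA_def)
      have "?ins t p ! t = snd p" using len t by (simp add: nth_append min_def)
      moreover have "cc (?ins t p) (snd p) t = cc (fst p) (snd p) t" using len t by (simp add: cc_ins)
      ultimately show "(if cc (?ins t p) (?ins t p ! t) t + t + 1 = Suc m then 1 else (0::nat))
          = (if cc (fst p) (snd p) t + t = m then 1 else 0)" by simp
    qed
    finally show "(\<Sum>L\<in>AA k (Suc m). if cc L (L!t) t + t + 1 = Suc m then 1 else (0::nat))
       = (\<Sum>p\<in>?P. if cc (fst p) (snd p) t + t = m then 1 else 0)" .
  qed
  also have "\<dots> = (\<Sum>p\<in>?P. \<Sum>t\<le>m. if cc (fst p) (snd p) t + t = m then 1 else 0)"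
    by (subst sum.swap) (simp add: lessThan_Suc_atMost)
  finally have e1: "NN k (Suc m) = (\<Sum>p\<in>?P. \<Sum>t\<le>m. if cc (fst p) (snd p) t + t = m then 1 else 0)" .
  have "NN k m = (\<Sum>M\<in>AA k m. \<Sum>t<m. \<Sum>v<k. if fst (M, v) ! t = snd (M, v) \<and> cc (fst (M,v)) (snd (M,v)) t + t + 1 = m then 1 else 0)"
    unfolding NN_def
  proof (intro sum.cong refl)
    fix M t assume M: "M \<in> AA k m" and t: "t \<in> {..<m}"
    then have "M ! t < k" by (auto simp: AA_def dest!: nth_mem[of t M])
    have "(\<Sum>v<k. if M ! t = v \<and> cc M v t + t + 1 = m then 1 else (0::nat))
      = (\<Sum>v<k. if v = M!t then (if cc M (M!t) t + t + 1 = m then 1 else 0) else 0)"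
      by (intro sum.cong refl) auto
    also have "\<dots> = (if cc M (M!t) t + t + 1 = m then 1 else 0)"
      using \<open>M ! t < k\<close> by (subst sum.delta) simp_all
    finally show "(if cc M (M ! t) t + t + 1 = m then 1 else 0) =
       (\<Sum>v<k. if fst (M, v) ! t = snd (M, v) \<and> cc (fst (M, v)) (snd (M, v)) t + t + 1 = m then 1 else (0::nat))"
      by simp
  qed
  also have "\<dots> = (\<Sum>M\<in>AA k m. \<Sum>v<k. \<Sum>t<m. if fst (M, v) ! t = snd (M, v) \<and> cc (fst (M,v)) (snd (M,v)) t + t + 1 = m then 1 else 0)"
    by (rule sum.cong[OF refl]) (rule sum.swap)
  also have "\<dots> = (\<Sum>p\<in>?P. \<Sum>t<m. if fst p ! t = snd p \<and> cc (fst p) (snd p) t + t + 1 = m then 1 else 0)"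
    by (rule sum_prod_pair)
  finally have e2: "NN k m = \<dots>" .
  have "NN k (Suc m) + NN k m = (\<Sum>p\<in>?P. (1::nat))"
    unfolding e1 e2 sum.distrib[symmetric]
  proof (intro sum.cong refl)
    fix p assume "p \<in> ?P"
    then have "length (fst p) = m" by (auto simp: AA_def)
    from per_Mv[OF this, of "snd p"]
    show "(\<Sum>t\<le>m. if cc (fst p) (snd p) t + t = m then 1 else 0) +
          (\<Sum>t<m. if fst p ! t = snd p \<and> cc (fst p) (snd p) t + t + 1 = m then 1 else 0) = (1::nat)" .
  qed
  also have "\<dots> = k ^ Suc m" using card_AA[of k m] by (simp add: card_cartesian_product)
  finally show ?thesis .
qed

lemma NN_0: "NN k 0 = 0" by (simp add: NN_def)

lemma NN_real: "k \<ge> 1 \<Longrightarrow> real (NN k n) / real k ^ n = (\<Sum>i<n. (-1) ^ i / real k ^ i)"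
proof (induction n)
  case 0 thus ?case by (simp add: NN_0)
next
  case (Suc n)
  have r: "real (NN k (Suc n)) = real k ^ Suc n - real (NN k n)"
    using NN_rec[of k n] by (metis add_diff_cancel_right' of_nat_add of_nat_power)
  have kp: "real k > 0" using Suc.prems by simp
  have "real (NN k (Suc n)) / real k ^ Suc n = 1 - (real (NN k n) / real k ^ n) / real k"
    unfolding r using kp by (simp add: field_simps)
  also have "\<dots> = 1 - (\<Sum>i<n. (-1) ^ i / real k ^ i) / real k" using Suc.IH Suc.prems by simp
  also have "\<dots> = 1 + (\<Sum>i<n. - ((-1) ^ i / real k ^ i / real k))"
    by (simp add: sum_divide_distrib sum_negf)
  also have "\<dots> = 1 + (\<Sum>i<n. (-1) ^ Suc i / real k ^ Suc i)"
    by (intro arg_cong2[where f="(+)"] sum.cong refl) (simp add: field_simps)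
  also have "\<dots> = (\<Sum>i<Suc n. (-1) ^ i / real k ^ i)"
    unfolding sum.lessThan_Suc_shift by simp
  finally show ?case .
qed

fun deck :: "'a list list \<Rightarrow> nat list \<Rightarrow> 'a list" where
  "deck ps [] = []"
| "deck ps (a # L) = hd (ps ! a) # deck (ps[a := tl (ps ! a)]) L"

primrec drop_labels :: "nat \<Rightarrow> 'a list list \<Rightarrow> nat list pmf" where
  "drop_labels 0 ps = return_pmf []"
| "drop_labels (Suc m) ps =
     bind_pmf (pmf_of_set {(i, j). i < length ps \<and> j < length (ps ! i)})
       (\<lambda>(i, j). map_pmf (Cons i) (drop_labels m (ps[i := tl (ps ! i)])))"

lemma drop_cards_eq: "drop_cards m ps = map_pmf (deck ps) (drop_labels m ps)"
proof (induction m arbitrary: ps)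
  case 0 thus ?case by simp
next
  case (Suc m)
  show ?case
    by (simp add: Suc.IH map_bind_pmf map_pmf_comp split_def o_def)
qed

lemma pmf_map_Cons: "pmf (map_pmf (Cons i) q) L = (case L of [] \<Rightarrow> 0 | a # L' \<Rightarrow> if a = i then pmf q L' else 0)"
proof (cases L)
  case Nil thus ?thesis by (auto intro!: pmf_map_outside)
next
  case (Cons a L')
  show ?thesis
  proof (cases "a = i")
    case True thus ?thesis using Cons by (simp add: pmf_map_inj' inj_def)
  next
    case False thus ?thesis using Cons by (auto intro!: pmf_map_outside)
  qed
qed

definition lab_ok :: "nat \<Rightarrow> nat list \<Rightarrow> nat list \<Rightarrow> bool" where
  "lab_ok m cs L \<longleftrightarrow> length L = m \<and> set L \<subseteq> {..<length cs} \<and> (\<forall>a<length cs. count_list L a = cs ! a)"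

lemma sum_list_len: "sum_list (map length ps) = (\<Sum>i<length ps. length (ps ! i))"
  by (simp add: sum_list_sum_nth atLeast0LessThan)

lemma card_P: "card {(i, j). i < length ps \<and> j < length (ps ! i)} = sum_list (map length ps)"
proof -
  have "{(i, j). i < length ps \<and> j < length (ps ! i)} = (SIGMA i:{..<length ps}. {..<length (ps ! i)})"
    by auto
  thus ?thesis by (simp add: sum_list_len)
qed

lemma finite_P: "finite {(i, j). i < length ps \<and> j < length (ps ! i)}"
proof -
  have "{(i, j). i < length ps \<and> j < length (ps ! i)} = (SIGMA i:{..<length ps}. {..<length (ps ! i)})"
    by auto
  thus ?thesis by simp
qed

lemma P_Sigma: "{(i, j). i < length ps \<and> j < length (ps ! i)} = (SIGMA i:{..<length ps}. {..<length (ps ! i)})"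
  by auto

lemma sum_over_P:
  "(\<Sum>x\<in>{(i, j). i < length ps \<and> j < length (ps ! i)}. if fst x = a then h else 0)
     = (if a < length ps then real (length (ps ! a)) * h else 0)"
proof -
  have "(\<Sum>x\<in>{(i, j). i < length ps \<and> j < length (ps ! i)}. if fst x = a then h else 0)
      = (\<Sum>i<length ps. \<Sum>j<length (ps ! i). if i = a then h else 0)"
    unfolding P_Sigma by (subst sum.Sigma) (auto simp: split_def)
  also have "\<dots> = (\<Sum>i<length ps. if i = a then real (length (ps ! i)) * h else 0)"
    by (intro sum.cong refl) auto
  also have "\<dots> = (if a < length ps then real (length (ps ! a)) * h else 0)"
    by (simp add: sum.delta)
  finally show ?thesis .
qed

lemma pmf_drop_labels:
  "sum_list (map length ps) = m \<Longrightarrow> pmf (drop_labels m ps) L =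
     (if lab_ok m (map length ps) L then (\<Prod>a<length ps. fact (length (ps ! a))) / fact m else 0)"
proof (induction m arbitrary: ps L)
  case 0
  then have e: "\<forall>a<length ps. ps ! a = []" by (simp add: sum_list_len)
  have "lab_ok 0 (map length ps) L \<longleftrightarrow> L = []" using e by (auto simp: lab_ok_def)
  moreover have "(\<Prod>a<length ps. fact (length (ps ! a))) = (1::real)" using e by (intro prod.neutral) simp
  ultimately show ?case by (auto simp: indicator_def)
next
  case (Suc m)
  let ?P = "{(i, j). i < length ps \<and> j < length (ps ! i)}"
  have cP: "card ?P = Suc m" using Suc.prems card_P[of ps] by simp
  then have ne: "?P \<noteq> {}" by (metis card.empty Zero_not_Suc)
  have fP: "finite ?P" by (rule finite_P)
  let ?h = "\<lambda>i. drop_labels m (ps[i := tl (ps ! i)])"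
  have pm: "pmf (drop_labels (Suc m) ps) L = (\<Sum>x\<in>?P. pmf (map_pmf (Cons (fst x)) (?h (fst x))) L) / real (Suc m)"
    using ne fP cP by (simp add: pmf_bind integral_pmf_of_set split_def)
  show ?case
  proof (cases L)
    case Nil
    then have "\<not> lab_ok (Suc m) (map length ps) L" by (simp add: lab_ok_def)
    with Nil show ?thesis unfolding pm by (simp add: pmf_map_Cons)
  next
    case (Cons a L')
    have "(\<Sum>x\<in>?P. pmf (map_pmf (Cons (fst x)) (?h (fst x))) L) = (\<Sum>x\<in>?P. if fst x = a then pmf (?h a) L' else 0)"
      using Cons by (intro sum.cong refl) (auto simp: pmf_map_Cons)
    also have "\<dots> = (if a < length ps then real (length (ps ! a)) * pmf (?h a) L' else 0)"
      by (rule sum_over_P)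
    finally have pm2: "pmf (drop_labels (Suc m) ps) L = (if a < length ps then real (length (ps ! a)) * pmf (?h a) L' else 0) / real (Suc m)"
      using pm by simp
    show ?thesis
    proof (cases "a < length ps \<and> ps ! a \<noteq> []")
      case False
      have "\<not> lab_ok (Suc m) (map length ps) L"
      proof
        assume H: "lab_ok (Suc m) (map length ps) L"
        then have a: "a < length ps" using Cons by (auto simp: lab_ok_def)
        then have "count_list L a = length (ps ! a)" using H by (auto simp: lab_ok_def)
        then show False using False a Cons by simp
      qed
      with False show ?thesis unfolding pm2 by auto
    next
      case True
      then have a: "a < length ps" and c: "length (ps ! a) > 0" by auto
      define ps' where "ps' = ps[a := tl (ps ! a)]"
      have len': "length ps' = length ps" by (simp add: ps'_def)
      have nth': "\<And>i. i < length ps \<Longrightarrow> length (ps ! i) = length (ps' ! i) + (if i = a then 1 else 0)"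
        using c by (auto simp: ps'_def nth_list_update)
      have "sum_list (map length ps) = (\<Sum>i<length ps. length (ps' ! i) + (if i = a then 1 else 0))"
        unfolding sum_list_len using nth' by (intro sum.cong refl) auto
      also have "\<dots> = sum_list (map length ps') + 1"
        using a by (simp add: sum.distrib sum_list_len len')
      finally have s': "sum_list (map length ps') = m" using Suc.prems by simp
      have IH: "pmf (drop_labels m ps') L' = (if lab_ok m (map length ps') L' then (\<Prod>a<length ps'. fact (length (ps' ! a))) / fact m else 0)"
        by (rule Suc.IH[OF s'])
      have ok: "lab_ok m (map length ps') L' \<longleftrightarrow> lab_ok (Suc m) (map length ps) L"
      proof
        assume H: "lab_ok m (map length ps') L'"
        show "lab_ok (Suc m) (map length ps) L"
          unfolding lab_ok_def
        proof (intro conjI allI impI)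
          show "length L = Suc m" using H Cons by (simp add: lab_ok_def)
          show "set L \<subseteq> {..<length (map length ps)}" using H Cons a len' by (auto simp: lab_ok_def)
          fix b assume "b < length (map length ps)"
          then have b: "b < length ps" by simp
          have "count_list L' b = length (ps' ! b)" using H b len' by (simp add: lab_ok_def)
          then show "count_list L b = map length ps ! b" using nth'[OF b] b Cons by auto
        qed
      next
        assume H: "lab_ok (Suc m) (map length ps) L"
        show "lab_ok m (map length ps') L'"
          unfolding lab_ok_def
        proof (intro conjI allI impI)
          show "length L' = m" using H Cons by (simp add: lab_ok_def)
          show "set L' \<subseteq> {..<length (map length ps')}" using H Cons a len' by (auto simp: lab_ok_def)
          fix b assume "b < length (map length ps')"
          then have b: "b < length ps" using len' by simp
          have "count_list L b = length (ps ! b)" using H b by (simp add: lab_ok_def)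
          then show "count_list L' b = map length ps' ! b" using nth'[OF b] b Cons len' by (auto split: if_splits)
        qed
      qed
      have "(\<Prod>i<length ps. fact (length (ps ! i))) = (\<Prod>i<length ps. fact (length (ps' ! i)) * (if i = a then real (length (ps ! a)) else 1) :: real)"
      proof (intro prod.cong refl)
        fix i assume "i \<in> {..<length ps}"
        then have i: "i < length ps" by simp
        show "fact (length (ps ! i)) = fact (length (ps' ! i)) * (if i = a then real (length (ps ! a)) else 1)"
        proof (cases "i = a")
          case True
          then have "length (ps ! i) = Suc (length (ps' ! i))" using nth'[OF i] by simp
          then show ?thesis using True by (simp add: fact_Suc)
        next
          case False thus ?thesis using nth'[OF i] by simp
        qed
      qed
      also have "\<dots> = (\<Prod>i<length ps'. fact (length (ps' ! i))) * real (length (ps ! a))"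
        using a by (simp add: prod.distrib prod.delta' len')
      finally have pr: "(\<Prod>i<length ps. fact (length (ps ! i))) = (\<Prod>i<length ps'. fact (length (ps' ! i))) * real (length (ps ! a))" .
      show ?thesis
      proof (cases "lab_ok (Suc m) (map length ps) L")
        case True
        have "pmf (drop_labels (Suc m) ps) L = real (length (ps ! a)) * ((\<Prod>a<length ps'. fact (length (ps' ! a))) / fact m) / real (Suc m)"
          unfolding pm2 using a IH ok True by (simp add: ps'_def[symmetric])
        also have "\<dots> = (real (length (ps ! a)) * (\<Prod>a<length ps'. fact (length (ps' ! a)))) / (real (Suc m) * fact m)"
          by (simp add: divide_divide_eq_left mult.commute)
        also have "\<dots> = (\<Prod>a<length ps. fact (length (ps ! a))) / fact (Suc m)"
          unfolding pr fact_Suc by (simp add: mult.commute)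
        finally show ?thesis using True by simp
      next
        case False
        then show ?thesis unfolding pm2 using a IH ok by (simp add: ps'_def[symmetric])
      qed
    qed
  qed
qed

lemma set_drop_labels:
  "sum_list (map length ps) = m \<Longrightarrow> L \<in> set_pmf (drop_labels m ps) \<Longrightarrow> lab_ok m (map length ps) L"
  by (auto simp: set_pmf_eq pmf_drop_labels split: if_splits)

lemma finite_lab_ok: "finite {L. lab_ok m cs L}"
proof (rule finite_subset)
  show "{L. lab_ok m cs L} \<subseteq> {L. set L \<subseteq> {..<length cs} \<and> length L = m}"
    by (auto simp: lab_ok_def)
  show "finite {L. set L \<subseteq> {..<length cs} \<and> length L = m}"
    by (rule finite_lists_length_eq) simp
qed

lemma card_lab_ok:
  assumes "sum_list cs = m"
  shows "real (card {L. lab_ok m cs L}) * (\<Prod>a<length cs. fact (cs ! a)) = fact m"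
proof -
  define ps where "ps = map (\<lambda>c. replicate c (0::nat)) cs"
  have mp: "map length ps = cs" by (simp add: ps_def o_def)
  have lp: "length ps = length cs" by (simp add: ps_def)
  have np: "\<And>a. a < length cs \<Longrightarrow> length (ps ! a) = cs ! a" by (simp add: ps_def)
  have s: "sum_list (map length ps) = m" using assms mp by simp
  have "(\<Sum>L\<in>{L. lab_ok m cs L}. pmf (drop_labels m ps) L) = 1"
    by (rule sum_pmf_eq_1[OF finite_lab_ok]) (use set_drop_labels[OF s] mp in auto)
  moreover have "(\<Sum>L\<in>{L. lab_ok m cs L}. pmf (drop_labels m ps) L)
     = real (card {L. lab_ok m cs L}) * ((\<Prod>a<length cs. fact (cs ! a)) / fact m)"
    by (simp add: pmf_drop_labels[OF s] mp lp np)
  ultimately show ?thesis by (simp add: field_simps)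
qed

lemma prod_list_nth: "prod_list (map f xs) = (\<Prod>i<length xs. f (xs ! i))"
  by (induction xs) (simp_all add: prod.lessThan_Suc_shift del: prod.lessThan_Suc)

lemma delta_lt: "(\<Sum>a<v. if a = x then 1 else 0) = (if x < (v::nat) then 1 else (0::nat))"
  by (induction v) auto

lemma sum_count_filter: "(\<Sum>a<v. count_list L a) = length (filter (\<lambda>x. x < v) (L::nat list))"
proof (induction L)
  case Nil thus ?case by simp
next
  case (Cons x L)
  have "(\<Sum>a<v. count_list (x # L) a) = (\<Sum>a<v. count_list L a + (if a = x then 1 else 0))"
    by (intro sum.cong refl) auto
  also have "\<dots> = (\<Sum>a<v. count_list L a) + (if x < v then 1 else 0)"
    using delta_lt[of v x] by (simp add: sum.distrib)
  finally show ?case using Cons by simp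
qed

lemma sum_counts: "set L \<subseteq> {..<k} \<Longrightarrow> sum_list (map (count_list L) [0..<k]) = length L"
proof -
  assume "set L \<subseteq> {..<k}"
  then have "filter (\<lambda>x. x < k) L = L" by (auto simp: filter_id_conv)
  then show ?thesis using sum_count_filter[where v=k and L=L]
    by (simp add: interv_sum_list_conv_sum_set_nat atLeast0LessThan)
qed

definition JJ :: "nat \<Rightarrow> nat \<Rightarrow> nat list set" where
  "JJ k n = {js. length js = k \<and> sum_list js = n}"

lemma finite_JJ: "finite (JJ k n)"
proof (rule finite_subset)
  show "JJ k n \<subseteq> {js. set js \<subseteq> {..n} \<and> length js = k}"
    by (auto simp: JJ_def member_le_sum_list)
  show "finite {js. set js \<subseteq> {..n} \<and> length js = k}"
    by (rule finite_lists_length_eq) simp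
qed

lemma lab_ok_unique: "lab_ok n js L \<Longrightarrow> length js = k \<Longrightarrow> js = map (count_list L) [0..<k]"
  by (intro nth_equalityI) (auto simp: lab_ok_def)

lemma lab_ok_js0: "L \<in> AA k n \<Longrightarrow> lab_ok n (map (count_list L) [0..<k]) L \<and> map (count_list L) [0..<k] \<in> JJ k n"
  by (auto simp: lab_ok_def AA_def JJ_def sum_counts)

lemma sum_card_JJ: "(\<Sum>js\<in>JJ k n. card {L. lab_ok n js L}) = k ^ n"
proof -
  have "(\<Sum>js\<in>JJ k n. card {L. lab_ok n js L}) = card (\<Union>js\<in>JJ k n. {L. lab_ok n js L})"
  proof (rule card_UN_disjoint[symmetric, OF finite_JJ])
    show "\<forall>js\<in>JJ k n. finite {L. lab_ok n js L}" using finite_lab_ok by blast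
    show "\<forall>js\<in>JJ k n. \<forall>js'\<in>JJ k n. js \<noteq> js' \<longrightarrow> {L. lab_ok n js L} \<inter> {L. lab_ok n js' L} = {}"
      by (auto simp: JJ_def dest: lab_ok_unique)
  qed
  also have "(\<Union>js\<in>JJ k n. {L. lab_ok n js L}) = AA k n"
  proof
    show "(\<Union>js\<in>JJ k n. {L. lab_ok n js L}) \<subseteq> AA k n"
      by (auto simp: JJ_def lab_ok_def AA_def)
    show "AA k n \<subseteq> (\<Union>js\<in>JJ k n. {L. lab_ok n js L})"
      using lab_ok_js0 by blast
  qed
  finally show ?thesis by (simp add: card_AA)
qed

lemma pl_pos: "0 < prod_list (map fact js :: real list)"
  by (induction js) auto

lemma pl_nonneg[simp]: "0 \<le> prod_list (map fact js :: real list)"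
  using pl_pos less_imp_le by blast

lemma pmf_cut:
  assumes "k \<ge> 1"
  shows "pmf (cut_pmf k n) js = (if js \<in> JJ k n then fact n / (\<Prod>j\<leftarrow>js. fact j) / real k ^ n else 0)"
proof -
  let ?f = "\<lambda>js::nat list. if length js = k \<and> sum_list js = n then fact n / (\<Prod>j\<leftarrow>js. fact j) / real k ^ n else (0::real)"
  have nn2: "\<And>js. 0 \<le> fact n / (prod_list (map fact js) * real k ^ n :: real)"
    by (intro divide_nonneg_nonneg mult_nonneg_nonneg) (auto intro: less_imp_le[OF pl_pos])
  have cl: "\<And>js. js \<in> JJ k n \<Longrightarrow> fact n / (\<Prod>j\<leftarrow>js. fact j) = real (card {L. lab_ok n js L})"
  proof -
    fix js assume "js \<in> JJ k n"
    then have "sum_list js = n" by (simp add: JJ_def)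
    from card_lab_ok[OF this] show "fact n / (\<Prod>j\<leftarrow>js. fact j) = real (card {L. lab_ok n js L})"
      by (simp add: prod_list_nth field_simps)
  qed
  have "(\<Sum>js\<in>JJ k n. ?f js) = (\<Sum>js\<in>JJ k n. real (card {L. lab_ok n js L}) / real k ^ n)"
    by (intro sum.cong refl) (auto simp: cl JJ_def)
  also have "\<dots> = real (\<Sum>js\<in>JJ k n. card {L. lab_ok n js L}) / real k ^ n"
    by (simp add: sum_divide_distrib)
  also have "\<dots> = 1" using assms by (simp add: sum_card_JJ)
  finally have s1: "(\<Sum>js\<in>JJ k n. ?f js) = 1" .
  have "(\<integral>\<^sup>+x. ennreal (?f x) \<partial>count_space UNIV) = (\<Sum>js\<in>JJ k n. ennreal (?f js))"
    by (rule nn_integral_count_space'[OF finite_JJ]) (auto simp: JJ_def)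
  also have "\<dots> = ennreal (\<Sum>js\<in>JJ k n. ?f js)"
    by (rule sum_ennreal) simp
  also have "\<dots> = 1" using s1 by simp
  finally have "(\<integral>\<^sup>+x. ennreal (?f x) \<partial>count_space UNIV) = 1" .
  then show ?thesis unfolding cut_pmf_def
    by (subst pmf_embed_pmf) (auto simp: JJ_def)
qed

lemma cut_len: "sum_list js \<le> length xs \<Longrightarrow> map length (cut_deck js xs) = js"
  by (induction js arbitrary: xs) auto

lemma cut_nth: "sum_list js \<le> length xs \<Longrightarrow> a < length js \<Longrightarrow> x < js ! a \<Longrightarrow>
    cut_deck js xs ! a ! x = xs ! (sum_list (take a js) + x)"
proof (induction js arbitrary: xs a)
  case Nil thus ?case by simp
next
  case (Cons j js)
  show ?case
  proof (cases a)
    case 0 thus ?thesis using Cons.prems by simp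
  next
    case (Suc a')
    have "cut_deck js (drop j xs) ! a' ! x = drop j xs ! (sum_list (take a' js) + x)"
      by (rule Cons.IH) (use Cons.prems Suc in auto)
    thus ?thesis using Suc Cons.prems by (simp add: add.assoc)
  qed
qed

lemma count_take_less: "t < length L \<Longrightarrow> count_list (take t L) (L ! t) < count_list L (L ! t)"
proof -
  assume t: "t < length L"
  have "count_list L (L!t) = count_list (take t L) (L!t) + count_list (drop t L) (L!t)"
    by (metis append_take_drop_id count_list_append)
  moreover have "drop t L = L ! t # drop (Suc t) L" using t by (rule Cons_nth_drop_Suc[symmetric])
  ultimately show ?thesis by simp
qed

lemma deck_nth:
  "(\<forall>a. count_list L a \<le> length (ps ! a)) \<Longrightarrow> set L \<subseteq> {..<length ps} \<Longrightarrow> t < length L \<Longrightarrow>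
   deck ps L ! t = ps ! (L ! t) ! count_list (take t L) (L ! t)"
proof (induction L arbitrary: ps t)
  case Nil thus ?case by simp
next
  case (Cons a L)
  have a: "a < length ps" using Cons.prems by simp
  have ca: "Suc (count_list L a) \<le> length (ps ! a)" using Cons.prems(1)[rule_format, of a] by simp
  define ps' where "ps' = ps[a := tl (ps ! a)]"
  show ?case
  proof (cases t)
    case 0
    have "ps ! a \<noteq> []" using ca by auto
    thus ?thesis using 0 by (simp add: hd_conv_nth)
  next
    case (Suc t')
    have t': "t' < length L" using Cons.prems Suc by simp
    have c': "\<forall>b. count_list L b \<le> length (ps' ! b)"
    proof
      fix b show "count_list L b \<le> length (ps' ! b)"
      proof (cases "b = a")
        case True thus ?thesis using ca a by (simp add: ps'_def)
      next
        case False thus ?thesis using Cons.prems(1)[rule_format, of b] by (simp add: ps'_def)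
      qed
    qed
    have s': "set L \<subseteq> {..<length ps'}" using Cons.prems by (simp add: ps'_def)
    have IH: "deck ps' L ! t' = ps' ! (L ! t') ! count_list (take t' L) (L ! t')"
      by (rule Cons.IH[OF c' s' t'])
    show ?thesis
    proof (cases "L ! t' = a")
      case True
      have "count_list (take t' L) a < count_list L a" using count_take_less[OF t'] True by simp
      then have lt: "count_list (take t' L) a < length (tl (ps ! a))" using ca by simp
      show ?thesis using IH True Suc a by (simp add: ps'_def nth_tl[OF lt])
    next
      case False
      show ?thesis using IH False Suc a by (simp add: ps'_def)
    qed
  qed
qed

lemma sum_list_take: "v \<le> length js \<Longrightarrow> sum_list (take v js) = (\<Sum>a<v. js ! a)"
  by (simp add: sum_list_sum_nth atLeast0LessThan min_def)

lemma sum_list_take_le: "v < length js \<Longrightarrow> sum_list (take v js) + js ! v \<le> sum_list (js :: nat list)"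
proof -
  assume v: "v < length js"
  have "sum_list (take (Suc v) js) = sum_list (take v js) + js ! v"
    using v by (simp add: take_Suc_conv_app_nth)
  moreover have "sum_list (take (Suc v) js) \<le> sum_list js"
    by (metis append_take_drop_id le_add1 sum_list_append)
  ultimately show ?thesis by simp
qed

lemma deck_val:
  assumes J: "js \<in> JJ k n" and ok: "lab_ok n js L" and t: "t < n"
  shows "deck (cut_deck js [1..<n+1]) L ! t = 1 + cc L (L ! t) t"
proof -
  let ?ps = "cut_deck js [1..<n+1]"
  have sj: "sum_list js = n" and lj: "length js = k" using J by (auto simp: JJ_def)
  have ml: "map length ?ps = js" using sj by (intro cut_len) simp
  then have lps: "length ?ps = k" using lj by (metis length_map)
  have lpa: "\<And>a. a < k \<Longrightarrow> length (?ps ! a) = js ! a" using ml lps by (metis nth_map)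
  have lL: "length L = n" and sL: "set L \<subseteq> {..<k}" and cL: "\<And>a. a < k \<Longrightarrow> count_list L a = js ! a"
    using ok lj by (auto simp: lab_ok_def)
  have c1: "\<forall>a. count_list L a \<le> length (?ps ! a)"
  proof
    fix a show "count_list L a \<le> length (?ps ! a)"
    proof (cases "a < k")
      case True thus ?thesis using cL lpa by simp
    next
      case False
      then have "a \<notin> set L" using sL by auto
      then show ?thesis by (simp add: count_list_0_iff)
    qed
  qed
  define v where "v = L ! t"
  have vk: "v < k" using sL t lL by (auto simp: v_def dest!: nth_mem[of t L])
  have ct: "count_list (take t L) v < js ! v" using count_take_less[of t L] t lL cL[OF vk] by (simp add: v_def)
  have dn: "deck ?ps L ! t = ?ps ! v ! count_list (take t L) v"
    using deck_nth[OF c1 _ ] sL lps t lL by (simp add: v_def)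
  also have "\<dots> = [1..<n+1] ! (sum_list (take v js) + count_list (take t L) v)"
    using cut_nth[of js "[1..<n+1]" v "count_list (take t L) v"] sj vk lj ct by simp
  also have "\<dots> = 1 + (sum_list (take v js) + count_list (take t L) v)"
    using sum_list_take_le[of v js] vk lj ct sj by (intro nth_upt) simp
  also have "sum_list (take v js) = length (filter (\<lambda>x. x < v) L)"
  proof -
    have "sum_list (take v js) = (\<Sum>a<v. js ! a)" using vk lj by (intro sum_list_take) simp
    also have "\<dots> = (\<Sum>a<v. count_list L a)" using vk cL by (intro sum.cong refl) simp
    also have "\<dots> = length (filter (\<lambda>x. x < v) L)" by (rule sum_count_filter)
    finally show ?thesis .
  qed
  finally show ?thesis by (simp add: cc_def v_def)
qed

lemma fix_count:
  assumes "\<And>t. t < n \<Longrightarrow> d ! t = 1 + g t"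
  shows "num_fixed_points n (perm_of_deck d \<circ> w0 n) = (\<Sum>t<n. if g t + t + 1 = n then 1 else 0)"
proof -
  have "{i \<in> {1..n}. (perm_of_deck d \<circ> w0 n) i = i} = (\<lambda>t. n - t) ` {t \<in> {..<n}. g t + t + 1 = n}"
  proof
    show "{i \<in> {1..n}. (perm_of_deck d \<circ> w0 n) i = i} \<subseteq> (\<lambda>t. n - t) ` {t \<in> {..<n}. g t + t + 1 = n}"
    proof
      fix i assume "i \<in> {i \<in> {1..n}. (perm_of_deck d \<circ> w0 n) i = i}"
      then have i: "1 \<le> i" "i \<le> n" and e: "d ! (n - i) = i" by (auto simp: perm_of_deck_def w0_def)
      have "n - i < n" using i by simp
      then have "d ! (n - i) = 1 + g (n - i)" by (rule assms)
      then have "g (n - i) + (n - i) + 1 = n" using e i by simp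
      moreover have "i = n - (n - i)" using i by simp
      ultimately show "i \<in> (\<lambda>t. n - t) ` {t \<in> {..<n}. g t + t + 1 = n}"
        using \<open>n - i < n\<close> by blast
    qed
    show "(\<lambda>t. n - t) ` {t \<in> {..<n}. g t + t + 1 = n} \<subseteq> {i \<in> {1..n}. (perm_of_deck d \<circ> w0 n) i = i}"
    proof
      fix i assume "i \<in> (\<lambda>t. n - t) ` {t \<in> {..<n}. g t + t + 1 = n}"
      then obtain t where t: "t < n" "g t + t + 1 = n" and it: "i = n - t" by auto
      have "d ! t = 1 + g t" using t by (intro assms)
      moreover have "n + 1 - i - 1 = t" using t it by simp
      ultimately show "i \<in> {i \<in> {1..n}. (perm_of_deck d \<circ> w0 n) i = i}"
        using t it by (auto simp: perm_of_deck_def w0_def)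
    qed
  qed
  moreover have "inj_on (\<lambda>t. n - t) {t \<in> {..<n}. g t + t + 1 = n}"
    by (auto simp: inj_on_def)
  ultimately have "num_fixed_points n (perm_of_deck d \<circ> w0 n) = card {t \<in> {..<n}. g t + t + 1 = n}"
    unfolding num_fixed_points_def by (simp add: card_image)
  also have "\<dots> = (\<Sum>t\<in>{t \<in> {..<n}. g t + t + 1 = n}. 1)" by simp
  also have "\<dots> = (\<Sum>t<n. if g t + t + 1 = n then 1 else 0)"
    by (rule sum.inter_filter) simp
  finally show ?thesis .
qed

lemma uniform_labels:
  assumes k: "k \<ge> 1"
  shows "bind_pmf (cut_pmf k n) (\<lambda>js. drop_labels n (cut_deck js [1..<n+1])) = pmf_of_set (AA k n)"
proof (rule pmf_eqI)
  fix L
  define js0 where "js0 = map (count_list L) [0..<k]"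
  have ml: "\<And>js. js \<in> JJ k n \<Longrightarrow> map length (cut_deck js [1..<n+1]) = js"
    by (intro cut_len) (simp add: JJ_def)
  have sl: "\<And>js. js \<in> JJ k n \<Longrightarrow> sum_list (map length (cut_deck js [1..<n+1])) = n"
    using ml by (simp add: JJ_def)
  have sJ: "\<And>js. js \<in> set_pmf (cut_pmf k n) \<Longrightarrow> js \<in> JJ k n"
    using k by (auto simp: set_pmf_eq pmf_cut split: if_splits)
  have pl: "\<And>js. js \<in> JJ k n \<Longrightarrow> pmf (drop_labels n (cut_deck js [1..<n+1])) L =
      (if lab_ok n js L then (\<Prod>a<length js. fact (js ! a)) / fact n else 0)"
  proof -
    fix js assume J: "js \<in> JJ k n"
    show "pmf (drop_labels n (cut_deck js [1..<n+1])) L =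
      (if lab_ok n js L then (\<Prod>a<length js. fact (js ! a)) / fact n else 0)"
      proof -
      let ?ps = "cut_deck js [1..<n+1]"
      have m: "map length ?ps = js" by (rule ml[OF J])
      have lp: "length ?ps = length js" using arg_cong[OF m, of length] by simp
      have pr: "(\<Prod>a<length ?ps. fact (length (?ps ! a))) = (\<Prod>a<length js. fact (js ! a) :: real)"
      proof (rule prod.cong)
        show "{..<length ?ps} = {..<length js}" using lp by simp
        fix a assume "a \<in> {..<length js}"
        then have "js ! a = length (?ps ! a)" using lp by (subst m[symmetric]) simp
        then show "fact (length (?ps ! a)) = (fact (js ! a) :: real)" by simp
      qed
      show ?thesis using pmf_drop_labels[OF sl[OF J], of L] unfolding m pr .
    qed
  qed
  have "pmf (bind_pmf (cut_pmf k n) (\<lambda>js. drop_labels n (cut_deck js [1..<n+1]))) L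
      = (\<integral>js. pmf (drop_labels n (cut_deck js [1..<n+1])) L \<partial>measure_pmf (cut_pmf k n))"
    by (rule pmf_bind)
  also have "\<dots> = (\<Sum>js\<in>{js0}. pmf (drop_labels n (cut_deck js [1..<n+1])) L * pmf (cut_pmf k n) js)"
  proof (rule integral_measure_pmf_real)
    fix js assume J: "js \<in> set_pmf (cut_pmf k n)" and nz: "pmf (drop_labels n (cut_deck js [1..<n+1])) L \<noteq> 0"
    have J': "js \<in> JJ k n" by (rule sJ[OF J])
    then have "lab_ok n js L" using nz pl[OF J'] by (auto split: if_splits)
    then show "js \<in> {js0}" using J' lab_ok_unique by (auto simp: JJ_def js0_def)
  qed simp
  also have "\<dots> = pmf (pmf_of_set (AA k n)) L"
  proof (cases "L \<in> AA k n")
    case True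
    have o: "lab_ok n js0 L" and J0: "js0 \<in> JJ k n" using lab_ok_js0[OF True] by (auto simp: js0_def)
    have fin: "finite (AA k n)" by (rule finite_AA)
    have ne: "AA k n \<noteq> {}" using True by auto
    have lj: "length js0 = k" by (simp add: js0_def)
    have "pmf (drop_labels n (cut_deck js0 [1..<n+1])) L * pmf (cut_pmf k n) js0
        = (\<Prod>a<length js0. fact (js0 ! a)) / fact n * (fact n / (\<Prod>j\<leftarrow>js0. fact j) / real k ^ n)"
      using pl[OF J0] o pmf_cut[OF k, of n js0] J0 by simp
    also have "\<dots> = 1 / real k ^ n"
      using pl_pos[of js0] by (simp add: prod_list_nth field_simps)
    also have "\<dots> = pmf (pmf_of_set (AA k n)) L"
      using True fin ne by (simp add: card_AA)
    finally show ?thesis by simp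
  next
    case False
    have "\<not> lab_ok n js0 L" using False by (auto simp: lab_ok_def AA_def js0_def)
    moreover have "pmf (pmf_of_set (AA k n)) L = 0"
    proof -
      have "replicate n 0 \<in> AA k n" using k by (auto simp: AA_def)
      then have "AA k n \<noteq> {}" by auto
      then show ?thesis using False finite_AA[of k n] by (auto simp: indicator_def)
    qed
    moreover have "pmf (drop_labels n (cut_deck js0 [1..<n+1])) L * pmf (cut_pmf k n) js0 = 0"
    proof (cases "js0 \<in> JJ k n")
      case True then show ?thesis unfolding pl[OF True] using \<open>\<not> lab_ok n js0 L\<close> by simp
    next
      case False then show ?thesis unfolding pmf_cut[OF k, of n js0] by simp
    qed
    ultimately show ?thesis by simp
  qed
  finally show "pmf (bind_pmf (cut_pmf k n) (\<lambda>js. drop_labels n (cut_deck js [1..<n+1]))) L = pmf (pmf_of_set (AA k n)) L" .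
qed

theorem corollary4p2:
  fixes k n :: nat
  assumes "k \<ge> 1"
  shows "measure_pmf.expectation (riffle_pmf k n)
           (\<lambda>d. real (num_fixed_points n (perm_of_deck d \<circ> w0 n)))
         = (\<Sum>i<n. (-1) ^ i / real k ^ i)"
proof -
  let ?D = "[1..<n+1]"
  let ?F = "\<lambda>d. real (num_fixed_points n (perm_of_deck d \<circ> w0 n))"
  let ?G = "\<lambda>L. real (\<Sum>t<n. if cc L (L!t) t + t + 1 = n then 1 else (0::nat))"
  have k: "k \<ge> 1" by fact
  have r: "riffle_pmf k n = bind_pmf (cut_pmf k n) (\<lambda>js. map_pmf (deck (cut_deck js ?D)) (drop_labels n (cut_deck js ?D)))"
    unfolding riffle_pmf_def drop_cards_eq ..
  have "map_pmf ?F (riffle_pmf k n) = bind_pmf (cut_pmf k n) (\<lambda>js. map_pmf (?F \<circ> deck (cut_deck js ?D)) (drop_labels n (cut_deck js ?D)))"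
    unfolding r map_bind_pmf map_pmf_comp o_def ..
  also have "\<dots> = bind_pmf (cut_pmf k n) (\<lambda>js. map_pmf ?G (drop_labels n (cut_deck js ?D)))"
  proof (rule bind_pmf_cong[OF refl])
    fix js assume "js \<in> set_pmf (cut_pmf k n)"
    then have J: "js \<in> JJ k n" using k by (auto simp: set_pmf_eq pmf_cut split: if_splits)
    have ml: "map length (cut_deck js ?D) = js" by (intro cut_len) (use J in \<open>simp add: JJ_def\<close>)
    have sl: "sum_list (map length (cut_deck js ?D)) = n" using ml J by (simp add: JJ_def)
    show "map_pmf (?F \<circ> deck (cut_deck js ?D)) (drop_labels n (cut_deck js ?D)) = map_pmf ?G (drop_labels n (cut_deck js ?D))"
    proof (rule map_pmf_cong[OF refl])
      fix L assume "L \<in> set_pmf (drop_labels n (cut_deck js ?D))"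
      from set_drop_labels[OF sl this] have ok: "lab_ok n js L" unfolding ml .
      have "num_fixed_points n (perm_of_deck (deck (cut_deck js ?D) L) \<circ> w0 n) = (\<Sum>t<n. if cc L (L!t) t + t + 1 = n then 1 else 0)"
        by (rule fix_count) (rule deck_val[OF J ok])
      then show "(?F \<circ> deck (cut_deck js ?D)) L = ?G L" by simp
    qed
  qed
  also have "\<dots> = map_pmf ?G (bind_pmf (cut_pmf k n) (\<lambda>js. drop_labels n (cut_deck js ?D)))"
    unfolding map_bind_pmf ..
  also have "\<dots> = map_pmf ?G (pmf_of_set (AA k n))"
    unfolding uniform_labels[OF k] ..
  finally have mF: "map_pmf ?F (riffle_pmf k n) = map_pmf ?G (pmf_of_set (AA k n))" .
  have "measure_pmf.expectation (riffle_pmf k n) ?F = measure_pmf.expectation (map_pmf ?F (riffle_pmf k n)) (\<lambda>x. x)"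
    by simp
  also have "\<dots> = measure_pmf.expectation (pmf_of_set (AA k n)) ?G"
    unfolding mF by simp
  also have "\<dots> = (\<Sum>L\<in>AA k n. ?G L) / real (card (AA k n))"
  proof (rule integral_pmf_of_set)
    show "finite (AA k n)" by (rule finite_AA)
    have "replicate n 0 \<in> AA k n" using k by (auto simp: AA_def)
    then show "AA k n \<noteq> {}" by auto
  qed
  also have "\<dots> = real (NN k n) / real k ^ n"
    by (simp add: NN_def card_AA)
  also have "\<dots> = (\<Sum>i<n. (-1) ^ i / real k ^ i)"
    by (rule NN_real[OF k])
  finally show ?thesis .
qed

end
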